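(* The column Capelli bitableaux $[i_1,\dots,i_h|j_1,\dots,j_h]$ ($h\ge0$, $i_r,j_r\in\{1,\dots,n\}$, the empty one being $1$) span $\mathbf{U}(gl(n))$ as a vector space; likewise the column Capelli *-bitableaux $[i_1,\dots,i_h|j_1,\dots,j_h]^*$ span $\mathbf{U}(gl(n))$.
   Context: Virtual variables: let $A_0=\{\alpha_1,\dots,\alpha_{m_0}\}$ (positive virtual symbols, parity $0$), $A_1=\{\beta_1,\dots,\beta_{m_1}\}$ (negative virtual symbols, parity $1$), $L=\{1,\dots,n\}$ (proper symbols, parity $1$), $m_0,m_1$ sufficiently large. $gl(m_0|m_1+n)$ is the Lie superalgebra with homogeneous basis $e_{a,b}$ of parity $|a|+|b|\bmod 2$ and superbracket $[e_{a,b},e_{c,d}]=\delta_{bc}e_{a,d}-(-1)^{(|a|+|b|)(|c|+|d|)}\delta_{ad}e_{c,b}$; $\mathbf{U}(gl(n))\subset \mathbf{U}(gl(m_0|m_1+n))$ via $e_{i,j}$, $i,j\in L$. A product $e_{a_m,b_m}\cdots e_{a_1,b_1}$ is irregular if there are $i\le m$ and a virtual $\gamma$ with $\#\{j\le i:b_j=\gamma\}>\#\{j<i:a_j=\gamma\}$; $\mathbf{Irr}$ is the left ideal they generate; it is known that $Virt=\mathbf{U}(gl(n))\oplus\mathbf{Irr}$ is a subalgebra with $\mathbf{Irr}$ a two-sided ideal, and $\mathfrak p:Virt\to\mathbf{U}(gl(n))$ is the projection with kernel $\mathbf{Irr}$. The column Capelli bitableau is $[i_1,\dots,i_h|j_1,\dots,j_h]=\mathfrak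 p(e_{i_1\alpha_1}\cdots e_{i_h\alpha_h}e_{\alpha_1j_1}\cdots e_{\alpha_hj_h})$ with $\alpha_1,\dots,\alpha_h$ distinct positive virtual symbols, and the column Capelli *-bitableau is $[i_1,\dots,i_h|j_1,\dots,j_h]^*=\mathfrak p(e_{i_1\beta_1}\cdots e_{i_h\beta_h}e_{\beta_1j_1}\cdots e_{\beta_hj_h})$ with $\beta_1,\dots,\beta_h$ distinct negative virtual symbols. *)

theory Defs
  imports Main
begin

text \<open>Symbols: positive virtual (Pos, parity 0), negative virtual (Neg, parity 1),
  proper (Prop k, parity 1, with 1 \<le> k \<le> n). Infinitely many virtual symbols
  (reading of "m0, m1 sufficiently large").\<close>
datatype sym = Pos nat | Neg nat | Prop nat

fun par :: "sym \<Rightarrow> bool" where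
  "par (Pos _) = False" | "par (Neg _) = True" | "par (Prop _) = True"

fun virtual :: "sym \<Rightarrow> bool" where
  "virtual (Prop _) = False" | "virtual _ = True"

fun vsym :: "nat \<Rightarrow> sym \<Rightarrow> bool" where
  "vsym n (Prop k) = (1 \<le> k \<and> k \<le> n)" | "vsym n _ = True"

type_synonym gen = "sym \<times> sym"   \<comment> \<open>(a,b) stands for e_{a,b}\<close>

definition vgen :: "nat \<Rightarrow> gen \<Rightarrow> bool" where
  "vgen n g = (vsym n (fst g) \<and> vsym n (snd g))"

definition gpar :: "gen \<Rightarrow> bool" where
  "gpar g = (par (fst g) \<noteq> par (snd g))"

definition ssign :: "gen \<Rightarrow> gen \<Rightarrow> 'k::comm_ring_1" where
  "ssign x y = (if gpar x \<and> gpar y then -1 else 1)"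

text \<open>Free associative algebra on the generators: a word (list, read left to right
  as a product) is a monomial; elements are coefficient functions on words.\<close>
type_synonym 'k fa = "gen list \<Rightarrow> 'k"

definition fzero :: "'k::comm_ring_1 fa" where "fzero = (\<lambda>_. 0)"
definition fadd :: "'k::comm_ring_1 fa \<Rightarrow> 'k fa \<Rightarrow> 'k fa" where
  "fadd f g = (\<lambda>w. f w + g w)"
definition fsmult :: "'k::comm_ring_1 \<Rightarrow> 'k fa \<Rightarrow> 'k fa" where
  "fsmult c f = (\<lambda>w. c * f w)"
definition fdiff :: "'k::comm_ring_1 fa \<Rightarrow> 'k fa \<Rightarrow> 'k fa" where
  "fdiff f g = (\<lambda>w. f w - g w)"
definition mono :: "gen list \<Rightarrow> 'k::comm_ring_1 fa" where
  "mono v = (\<lambda>w. if w = v then 1 else 0)"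
definition fmul :: "'k::comm_ring_1 fa \<Rightarrow> 'k fa \<Rightarrow> 'k fa" where
  "fmul f g = (\<lambda>w. \<Sum>i\<le>length w. f (take i w) * g (drop i w))"

inductive_set lspan :: "'k::comm_ring_1 fa set \<Rightarrow> 'k fa set" for S where
  lspan_zero: "fzero \<in> lspan S"
| lspan_step: "x \<in> S \<Longrightarrow> y \<in> lspan S \<Longrightarrow> fadd (fsmult c x) y \<in> lspan S"

definition sbr :: "gen \<Rightarrow> gen \<Rightarrow> 'k::comm_ring_1 fa" where
  "sbr x y = fadd (if snd x = fst y then mono [(fst x, snd y)] else fzero)
                  (fsmult (- ssign x y) (if fst x = snd y then mono [(fst y, snd x)] else fzero))"

definition rel :: "gen \<Rightarrow> gen \<Rightarrow> 'k::comm_ring_1 fa" where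
  "rel x y = fdiff (fdiff (mono [x, y]) (fsmult (ssign x y) (mono [y, x]))) (sbr x y)"

text \<open>Two-sided ideal of the defining relations of U(gl(m0|m1+n)).\<close>
definition Iid :: "nat \<Rightarrow> 'k::comm_ring_1 fa set" where
  "Iid n = lspan {fmul (mono u) (fmul (rel x y) (mono v)) | u v x y.
      (\<forall>g\<in>set u. vgen n g) \<and> (\<forall>g\<in>set v. vgen n g) \<and> vgen n x \<and> vgen n y}"

text \<open>Subsets modulo the ideal: the set of all representatives of classes in S.\<close>
definition modI :: "nat \<Rightarrow> 'k::comm_ring_1 fa set \<Rightarrow> 'k fa set" where
  "modI n S = {x. \<exists>y\<in>S. fdiff x y \<in> Iid n}"

text \<open>Irregular monomials. The word w = [e_{a_m b_m}, ..., e_{a_1 b_1}] (left to right),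
  so rev w ! (j-1) = (a_j, b_j).\<close>
definition irregular :: "gen list \<Rightarrow> bool" where
  "irregular w = (let v = rev w in \<exists>i<length v. \<exists>\<gamma>. virtual \<gamma> \<and>
      card {j. j \<le> i \<and> snd (v ! j) = \<gamma>} > card {j. j < i \<and> fst (v ! j) = \<gamma>})"

text \<open>Representatives of elements of the left ideal Irr.\<close>
definition IrrL :: "nat \<Rightarrow> 'k::comm_ring_1 fa set" where
  "IrrL n = modI n (lspan {mono (u @ w) | u w.
      (\<forall>g\<in>set u. vgen n g) \<and> (\<forall>g\<in>set w. vgen n g) \<and> irregular w})"

text \<open>Representatives of elements of U(gl(n)).\<close>
definition Ugl :: "nat \<Rightarrow> 'k::comm_ring_1 fa set" where
  "Ugl n = modI n (lspan {mono w | w. \<forall>g\<in>set w. \<exists>i j. g = (Prop i, Prop j)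
      \<and> 1 \<le> i \<and> i \<le> n \<and> 1 \<le> j \<and> j \<le> n})"

text \<open>The projection p : Virt \<rightarrow> U(gl(n)) with kernel Irr; p x is returned as
  the set of representatives of the class p(x).\<close>
definition proj :: "nat \<Rightarrow> 'k::comm_ring_1 fa \<Rightarrow> 'k fa set" where
  "proj n x = {u \<in> Ugl n. fdiff x u \<in> IrrL n}"

text \<open>The word e_{i_1 al_1} ... e_{i_h al_h} e_{al_1 j_1} ... e_{al_h j_h},
  with al_r = alpha r (alpha = Pos or Neg, giving distinct virtual symbols).\<close>
definition cword :: "(nat \<Rightarrow> sym) \<Rightarrow> nat list \<Rightarrow> nat list \<Rightarrow> gen list" where
  "cword alpha is js =
     map (\<lambda>r. (Prop (is ! r), alpha (Suc r))) [0..<length is] @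
     map (\<lambda>r. (alpha (Suc r), Prop (js ! r))) [0..<length is]"

text \<open>All column Capelli bitableaux (alpha = Pos) resp. *-bitableaux (alpha = Neg),
  as representatives.\<close>
definition Bitab :: "nat \<Rightarrow> (nat \<Rightarrow> sym) \<Rightarrow> 'k::comm_ring_1 fa set" where
  "Bitab n alpha = \<Union> {proj n (mono (cword alpha is js)) | is js.
      length is = length js \<and> set is \<subseteq> {1..n} \<and> set js \<subseteq> {1..n}}"

end

theory Submission imports Defs "HOL-Library.Function_Algebras" begin


lemma fadd_eq: "fadd f g = f + g" by (auto simp: fadd_def)
lemma fdiff_eq: "fdiff f g = f - g" by (auto simp: fdiff_def)
lemma fzero_eq: "fzero = 0" by (auto simp: fzero_def)

lemma fmul_mono_left:
  "fmul (Defs.mono u) f = (\<lambda>w. if length u \<le> length w \<and> take (length u) w = u then f (drop (length u) w) else 0)"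
proof (rule ext)
  fix w :: "gen list"
  have "fmul (Defs.mono u) f w = (\<Sum>i\<le>length w. if i = length u then (if take (length u) w = u then f (drop (length u) w) else 0) else 0)"
    unfolding fmul_def mono_def
    by (rule sum.cong) auto
  also have "\<dots> = (if length u \<le> length w \<and> take (length u) w = u then f (drop (length u) w) else 0)"
    by simp
  finally show "fmul (Defs.mono u) f w = (if length u \<le> length w \<and> take (length u) w = u then f (drop (length u) w) else 0)" .
qed

lemma fmul_mono_right:
  "fmul f (Defs.mono v) = (\<lambda>w. if length v \<le> length w \<and> drop (length w - length v) w = v then f (take (length w - length v) w) else 0)"
proof (rule ext)
  fix w :: "gen list"
  have "fmul f (Defs.mono v) w = (\<Sum>i\<le>length w. if i = length w - length v then (if length v \<le> length w \<and> drop (length w - length v) w = v then f (take (length w - length v) w) else 0) else 0)"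
    unfolding fmul_def mono_def
    by (rule sum.cong) auto
  also have "\<dots> = (if length v \<le> length w \<and> drop (length w - length v) w = v then f (take (length w - length v) w) else 0)"
    by simp
  finally show "fmul f (Defs.mono v) w = (if length v \<le> length w \<and> drop (length w - length v) w = v then f (take (length w - length v) w) else 0)" .
qed

lemma mono_mult: "fmul (Defs.mono a) (Defs.mono b) = (Defs.mono (a @ b) :: 'k::comm_ring_1 fa)"
  unfolding fmul_mono_left by (rule ext) (auto simp: mono_def append_eq_conv_conj, metis append_take_drop_id)

lemma fmul_assoc_mono: "fmul (Defs.mono a) (fmul (Defs.mono u) G) = fmul (Defs.mono (a @ u)) (G :: 'k::comm_ring_1 fa)"
  by (rule ext) (auto simp: fmul_mono_left take_add min_def add.commute)

lemma fmul_add_l: "fmul (f + g) h = fmul f h + fmul g (h :: 'k::comm_ring_1 fa)"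
  by (rule ext) (simp add: fmul_def distrib_right sum.distrib)
lemma fmul_add_r: "fmul h (f + g) = fmul h f + fmul h (g :: 'k::comm_ring_1 fa)"
  by (rule ext) (simp add: fmul_def distrib_left sum.distrib)
lemma fmul_diff_l: "fmul (f - g) h = fmul f h - fmul g (h :: 'k::comm_ring_1 fa)"
  by (rule ext) (simp add: fmul_def left_diff_distrib sum_subtractf)
lemma fmul_diff_r: "fmul h (f - g) = fmul h f - fmul h (g :: 'k::comm_ring_1 fa)"
  by (rule ext) (simp add: fmul_def right_diff_distrib sum_subtractf)
lemma fmul_sm_l: "fmul (fsmult c f) h = fsmult c (fmul f (h :: 'k::comm_ring_1 fa))"
  by (rule ext) (simp add: fmul_def fsmult_def sum_distrib_left mult.assoc)
lemma fmul_sm_r: "fmul h (fsmult c f) = fsmult c (fmul h (f :: 'k::comm_ring_1 fa))"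
  by (rule ext) (simp add: fmul_def fsmult_def sum_distrib_left algebra_simps)
lemma fmul_zero_l: "fmul 0 h = (0 :: 'k::comm_ring_1 fa)"
  by (rule ext) (simp add: fmul_def)
lemma fmul_zero_r: "fmul h 0 = (0 :: 'k::comm_ring_1 fa)"
  by (rule ext) (simp add: fmul_def)



lemma lam_plus[simp]: "(\<lambda>a. f a + g a) = (f + g :: 'k::comm_ring_1 fa)" by (rule ext) simp

lemma lam_minus[simp]: "(\<lambda>a. f a - g a) = (f - g :: 'k::comm_ring_1 fa)" by (rule ext) simp
lemma lam_uminus[simp]: "(\<lambda>a. - f a) = (- f :: 'k::comm_ring_1 fa)" by (rule ext) simp

definition sub :: "'k::comm_ring_1 fa set \<Rightarrow> bool" where
  "sub X \<longleftrightarrow> 0 \<in> X \<and> (\<forall>x\<in>X. \<forall>y\<in>X. x + y \<in> X) \<and> (\<forall>c. \<forall>x\<in>X. fsmult c x \<in> X)"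

lemma sub_0: "sub X \<Longrightarrow> 0 \<in> X" by (simp add: sub_def)
lemma sub_add: "sub X \<Longrightarrow> x \<in> X \<Longrightarrow> y \<in> X \<Longrightarrow> x + y \<in> X" by (simp add: sub_def)
lemma sub_sm: "sub X \<Longrightarrow> x \<in> X \<Longrightarrow> fsmult c x \<in> X" by (simp add: sub_def)
lemma sub_diff: "sub X \<Longrightarrow> x \<in> X \<Longrightarrow> y \<in> X \<Longrightarrow> x - y \<in> X"
proof -
  assume a: "sub X" "x \<in> X" "y \<in> X"
  have e: "x - y = x + fsmult (-1) y" by (rule ext) (simp add: fsmult_def)
  show ?thesis unfolding e by (rule sub_add[OF a(1,2) sub_sm[OF a(1,3)]])
qed
lemma sub_neg: "sub X \<Longrightarrow> x \<in> X \<Longrightarrow> - x \<in> X"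
  using sub_diff[of X 0 x] sub_0[of X] by simp

lemma lspan_add: "x \<in> lspan S \<Longrightarrow> y \<in> lspan S \<Longrightarrow> x + y \<in> lspan S"
proof (induction x rule: lspan.induct)
  case lspan_zero thus ?case by (simp add: fzero_eq)
next
  case (lspan_step s x c)
  have e: "fadd (fsmult c s) x + y = fadd (fsmult c s) (x + y)" by (rule ext) (simp add: fadd_def)
  show ?case unfolding e by (rule lspan.lspan_step) (use lspan_step in auto)
qed

lemma lspan_sm: "x \<in> lspan S \<Longrightarrow> fsmult d x \<in> lspan S"
proof (induction x rule: lspan.induct)
  case lspan_zero
  have "fsmult d fzero = (fzero :: 'a fa)" by (rule ext) (simp add: fsmult_def fzero_def)
  thus ?case by (simp add: lspan.lspan_zero)
next
  case (lspan_step s x c)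
  have "fsmult d (fadd (fsmult c s) x) = fadd (fsmult (d*c) s) (fsmult d x)"
    by (rule ext) (simp add: fsmult_def fadd_def algebra_simps)
  thus ?case using lspan_step by (simp add: lspan.lspan_step)
qed

lemma sub_lspan: "sub (lspan S)"
  unfolding sub_def using lspan.lspan_zero[of S] by (simp add: fzero_eq lspan_add lspan_sm)

lemma lspan_base: "s \<in> S \<Longrightarrow> s \<in> lspan S"
proof -
  assume "s \<in> S"
  hence "fadd (fsmult 1 s) fzero \<in> lspan S" by (intro lspan.intros)
  moreover have "fadd (fsmult 1 s) fzero = s" by (rule ext) (simp add: fsmult_def fadd_def fzero_def)
  ultimately show ?thesis by simp
qed

lemma lspan_least: assumes "sub T" "S \<subseteq> T" shows "x \<in> lspan S \<Longrightarrow> x \<in> T"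
proof (induction x rule: lspan.induct)
  case lspan_zero thus ?case using assms by (simp only: fzero_eq sub_0)
next
  case (lspan_step s x c) thus ?case using assms by (auto simp: fadd_eq intro!: sub_add sub_sm)
qed

lemma lspan_image:
  assumes "\<And>x y. L (x + y) = L x + L y" "\<And>c x. L (fsmult c x) = fsmult c (L x)" "L 0 = 0"
    "\<And>s. s \<in> S \<Longrightarrow> L s \<in> T" "sub T"
  shows "x \<in> lspan S \<Longrightarrow> L x \<in> T"
proof (induction x rule: lspan.induct)
  case lspan_zero thus ?case using assms by (simp only: fzero_eq sub_0)
next
  case (lspan_step s x c) thus ?case using assms by (auto simp: fadd_eq intro!: sub_add sub_sm)
qed

lemma sub_Iid: "sub (Iid n)" unfolding Iid_def by (rule sub_lspan)

lemma fsmult_add: "fsmult c (x + y) = fsmult c x + fsmult c (y :: 'k::comm_ring_1 fa)"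
  by (rule ext) (simp add: fsmult_def algebra_simps)
lemma fsmult_diff: "fsmult c (x - y) = fsmult c x - fsmult c (y :: 'k::comm_ring_1 fa)"
  by (rule ext) (simp add: fsmult_def algebra_simps)
lemma fsmult_0: "fsmult c 0 = (0 :: 'k::comm_ring_1 fa)"
  by (rule ext) (simp add: fsmult_def)
lemma fsmult_1: "fsmult 1 x = (x :: 'k::comm_ring_1 fa)"
  by (rule ext) (simp add: fsmult_def)
lemma fsmult_fsmult: "fsmult c (fsmult d x) = fsmult (c * d) (x :: 'k::comm_ring_1 fa)"
  by (rule ext) (simp add: fsmult_def)

lemma sub_modI: assumes "sub X" shows "sub (modI n X)"
  unfolding sub_def modI_def
proof (intro conjI ballI allI; clarsimp)
  show "\<exists>y\<in>X. fdiff 0 y \<in> Iid n" using sub_0[OF assms] sub_0[OF sub_Iid, of n] by (auto simp: fdiff_eq intro!: bexI[of _ 0])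
next
  fix x y x' y' assume "x' \<in> X" "y' \<in> X" "fdiff x x' \<in> Iid n" "fdiff y y' \<in> Iid n"
  thus "\<exists>z\<in>X. fdiff (x + y) z \<in> Iid n"
    using sub_add[OF sub_Iid, of "x - x'" n "y - y'"] sub_add[OF assms]
    by (intro bexI[of _ "x' + y'"]) (auto simp: fdiff_eq algebra_simps)
next
  fix c x x' assume "x' \<in> X" "fdiff x x' \<in> Iid n"
  thus "\<exists>z\<in>X. fdiff (fsmult c x) z \<in> Iid n"
    using sub_sm[OF sub_Iid, of "x - x'" n c] sub_sm[OF assms]
    by (intro bexI[of _ "fsmult c x'"]) (auto simp: fdiff_eq fsmult_diff)
qed



definition vw :: "nat \<Rightarrow> gen list \<Rightarrow> bool" where "vw n w \<longleftrightarrow> (\<forall>g\<in>set w. vgen n g)"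

lemma vw_simps[simp]: "vw n [] = True" "vw n (x # w) = (vgen n x \<and> vw n w)" "vw n (w @ w') = (vw n w \<and> vw n w')"
  by (auto simp: vw_def)

lemma gen_expand:
  "fmul (Defs.mono u) (fmul (rel x y) (Defs.mono v)) =
    (Defs.mono (u @ x # y # v) - (fsmult (ssign x y) (Defs.mono (u @ y # x # v))
      + (if snd x = fst y then Defs.mono (u @ (fst x, snd y) # v) else 0)
      - fsmult (ssign x y) (if fst x = snd y then Defs.mono (u @ (fst y, snd x) # v) else 0)) :: 'k::comm_ring_1 fa)"
  apply (cases "snd x = fst y"; cases "fst x = snd y")
     apply (simp_all add: rel_def sbr_def fdiff_eq fadd_eq fzero_eq fmul_diff_l fmul_add_l fmul_sm_l
        fmul_diff_r fmul_add_r fmul_sm_r mono_mult fmul_zero_l fmul_zero_r)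
  apply (auto simp: fun_eq_iff fsmult_def algebra_simps)
  done

lemma swap_Iid:
  assumes "vw n u" "vw n v" "vgen n x" "vgen n y"
  shows "(Defs.mono (u @ x # y # v) - (fsmult (ssign x y) (Defs.mono (u @ y # x # v))
      + (if snd x = fst y then Defs.mono (u @ (fst x, snd y) # v) else 0)
      - fsmult (ssign x y) (if fst x = snd y then Defs.mono (u @ (fst y, snd x) # v) else 0)) :: 'k::comm_ring_1 fa) \<in> Iid n"
proof -
  have "fmul (Defs.mono u) (fmul (rel x y) (Defs.mono v)) \<in> (Iid n :: 'k fa set)"
    unfolding Iid_def by (rule lspan_base) (use assms in \<open>unfold vw_def; blast\<close>)
  thus ?thesis by (simp only: gen_expand)
qed

lemma Igen:
  assumes "vw n u" "vw n v" "vgen n x" "vgen n y"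
  shows "fmul (Defs.mono u) (fmul (rel x y) (Defs.mono v)) \<in> (Iid n :: 'k::comm_ring_1 fa set)"
  unfolding Iid_def by (rule lspan_base) (use assms in \<open>unfold vw_def; blast\<close>)

lemma lm_Iid:
  assumes "vw n a" "x \<in> Iid n"
  shows "fmul (Defs.mono a) x \<in> (Iid n :: 'k::comm_ring_1 fa set)"
proof (rule lspan_image[where L="fmul (Defs.mono a)", OF _ _ _ _ _ assms(2)[unfolded Iid_def], folded Iid_def])
  show "sub (Iid n :: 'k fa set)" by (rule sub_Iid)
next
  fix s assume "s \<in> {fmul (Defs.mono u) (fmul (rel x y) (Defs.mono v)) |u v x y.
      (\<forall>g\<in>set u. vgen n g) \<and> (\<forall>g\<in>set v. vgen n g) \<and> vgen n x \<and> vgen n y}"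
  then obtain u v x y where s: "s = fmul (Defs.mono u) (fmul (rel x y) (Defs.mono v))"
    "(\<forall>g\<in>set u. vgen n g)" "(\<forall>g\<in>set v. vgen n g)" "vgen n x" "vgen n y" by blast
  have "fmul (Defs.mono a) s = fmul (Defs.mono (a @ u)) (fmul (rel x y) (Defs.mono v))"
    using s(1) by (simp add: fmul_assoc_mono)
  thus "fmul (Defs.mono a) s \<in> Iid n"
    using Igen[of n "a @ u" v x y] s assms(1) by (auto simp: vw_def)
qed (simp_all add: fmul_add_r fmul_sm_r fmul_zero_r)

definition JJ :: "nat \<Rightarrow> 'k::comm_ring_1 fa set" where
  "JJ n = lspan {Defs.mono (u @ w) | u w.
      (\<forall>g\<in>set u. vgen n g) \<and> (\<forall>g\<in>set w. vgen n g) \<and> irregular w}"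

lemma Jgen:
  assumes "vw n u" "vw n w" "irregular w"
  shows "Defs.mono (u @ w) \<in> (JJ n :: 'k::comm_ring_1 fa set)"
  unfolding JJ_def by (rule lspan_base) (use assms in \<open>unfold vw_def; blast\<close>)

lemma IrrL_JJ: "IrrL n = modI n (JJ n)" by (simp add: IrrL_def JJ_def)

lemma sub_IrrL: "sub (IrrL n)" unfolding IrrL_JJ JJ_def by (intro sub_modI sub_lspan)

lemma Iid_IrrL: "x \<in> Iid n \<Longrightarrow> x \<in> IrrL n"
  unfolding IrrL_JJ modI_def JJ_def
  using sub_0[OF sub_lspan] by (auto simp: fdiff_eq fzero_eq intro!: bexI[of _ 0])

lemma irr_IrrL:
  assumes "vw n w" "irregular w"
  shows "(Defs.mono w :: 'k::comm_ring_1 fa) \<in> IrrL n"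
  unfolding IrrL_JJ modI_def
proof (intro CollectI bexI)
  show "Defs.mono w \<in> (JJ n :: 'k fa set)" using Jgen[of n "[]" w] assms by simp
  show "fdiff (Defs.mono w) (Defs.mono w) \<in> (Iid n :: 'k fa set)"
    using sub_0[OF sub_Iid] by (simp add: fdiff_eq)
qed

lemma lm_IrrL:
  assumes "vw n a" "x \<in> IrrL n"
  shows "fmul (Defs.mono a) x \<in> (IrrL n :: 'k::comm_ring_1 fa set)"
proof -
  from assms(2) obtain y where y: "y \<in> JJ n" "x - y \<in> Iid n"
    unfolding IrrL_JJ modI_def by (auto simp: fdiff_eq)
  have "fmul (Defs.mono a) y \<in> (JJ n :: 'k fa set)"
    unfolding JJ_def
  proof (rule lspan_image[where L="fmul (Defs.mono a)", OF _ _ _ _ _ y(1)[unfolded JJ_def]])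
    fix s assume "s \<in> {Defs.mono (u @ w) | u w.
      (\<forall>g\<in>set u. vgen n g) \<and> (\<forall>g\<in>set w. vgen n g) \<and> irregular w}"
    then obtain u w where s: "s = Defs.mono (u @ w)" "(\<forall>g\<in>set u. vgen n g)" "(\<forall>g\<in>set w. vgen n g)" "irregular w"
      by blast
    have "fmul (Defs.mono a) s = Defs.mono ((a @ u) @ w)" using s(1) by (simp add: mono_mult)
    thus "fmul (Defs.mono a) s \<in> lspan {Defs.mono (u @ w) | u w.
      (\<forall>g\<in>set u. vgen n g) \<and> (\<forall>g\<in>set w. vgen n g) \<and> irregular w}"
      using Jgen[of n "a @ u" w] s assms(1) by (auto simp: vw_def JJ_def)
  qed (simp_all add: fmul_add_r fmul_sm_r fmul_zero_r sub_lspan)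
  moreover have "fmul (Defs.mono a) x - fmul (Defs.mono a) y \<in> Iid n"
    using lm_Iid[OF assms(1) y(2)] by (simp add: fmul_diff_r)
  ultimately show ?thesis unfolding IrrL_JJ modI_def by (auto simp: fdiff_eq)
qed

lemma irr_word:
  assumes "virtual \<gamma>" "snd x = \<gamma>" "\<forall>r\<in>set R. fst r \<noteq> \<gamma>"
  shows "irregular (Q @ x # R)"
proof -
  let ?v = "rev (Q @ x # R)"
  have v: "?v = rev R @ x # rev Q" by simp
  have vi: "?v ! length R = x" unfolding v by (simp add: nth_append)
  have e: "{j. j < length R \<and> fst (?v ! j) = \<gamma>} = {}"
  proof -
    { fix j assume j: "j < length R" "fst (?v ! j) = \<gamma>"
      hence "?v ! j = rev R ! j" unfolding v by (simp add: nth_append)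
      moreover have "rev R ! j \<in> set R" using j(1) by (metis length_rev nth_mem set_rev)
      ultimately have False using j(2) assms(3) by auto }
    thus ?thesis by blast
  qed
  have f: "finite {j. j \<le> length R \<and> snd (?v ! j) = \<gamma>}" by (rule finite_subset[of _ "{..length R}"]) auto
  have "length R \<in> {j. j \<le> length R \<and> snd (?v ! j) = \<gamma>}" using vi assms(2) by simp
  hence "card {j. j \<le> length R \<and> snd (?v ! j) = \<gamma>} > 0" using f by (metis card_gt_0_iff empty_iff)
  moreover have "card {j. j < length R \<and> fst (?v ! j) = \<gamma>} = 0" by (simp only: e card.empty)
  ultimately have "card {j. j < length R \<and> fst (?v ! j) = \<gamma>} < card {j. j \<le> length R \<and> snd (?v ! j) = \<gamma>}"
    by linarith
  moreover have "length R < length ?v" by simp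
  ultimately show ?thesis unfolding irregular_def Let_def using assms(1) by blast
qed



lemma lam_zero[simp]: "(\<lambda>a. 0) = (0 :: 'k::comm_ring_1 fa)" by (rule ext) simp

lemma ssign_nz: "(ssign x y :: 'k::field) \<noteq> 0" by (simp add: ssign_def)

lemma sub_IrrL_diff: "x - y \<in> IrrL n \<Longrightarrow> y - z \<in> IrrL n \<Longrightarrow> x - z \<in> (IrrL n :: 'k::comm_ring_1 fa set)"
  using sub_add[OF sub_IrrL, of "x - y" n "y - z"] by (simp add: algebra_simps)

lemma cong_trans_sm:
  assumes "x - fsmult c y \<in> IrrL n" "y - fsmult d z \<in> IrrL n"
  shows "x - fsmult (c * d) z \<in> (IrrL n :: 'k::comm_ring_1 fa set)"
proof -
  have e: "x - fsmult (c * d) z = (x - fsmult c y) + fsmult c (y - fsmult d z)"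
    by (rule ext) (simp add: fsmult_def algebra_simps)
  show ?thesis unfolding e by (rule sub_add[OF sub_IrrL assms(1) sub_sm[OF sub_IrrL assms(2)]])
qed

lemma vsym_virtual: "virtual s \<Longrightarrow> vsym n s" by (cases s) auto

lemma COMM:
  assumes "vw n Cs" "vgen n B" "\<forall>C\<in>set Cs. snd C \<noteq> fst B \<and> fst C \<noteq> snd B"
  shows "vw n Q \<Longrightarrow> vw n R \<Longrightarrow> \<exists>c. c \<noteq> 0 \<and>
    Defs.mono (Q @ Cs @ B # R) - fsmult c (Defs.mono (Q @ B # Cs @ R)) \<in> (IrrL n :: 'k::field fa set)"
  using assms
proof (induction Cs arbitrary: Q)
  case Nil thus ?case using sub_0[OF sub_IrrL] by (intro exI[of _ 1]) (simp add: fsmult_1)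
next
  case (Cons C Cs)
  from Cons.IH[of "Q @ [C]"] Cons.prems obtain c where c: "c \<noteq> 0"
    "Defs.mono ((Q @ [C]) @ Cs @ B # R) - fsmult c (Defs.mono ((Q @ [C]) @ B # Cs @ R)) \<in> (IrrL n :: 'k fa set)"
    by auto
  have "Defs.mono (Q @ C # B # (Cs @ R)) - (fsmult (ssign C B) (Defs.mono (Q @ B # C # (Cs @ R))) + 0 - fsmult (ssign C B) 0)
     \<in> (Iid n :: 'k fa set)"
    using swap_Iid[of n Q "Cs @ R" C B] Cons.prems by auto
  hence s: "Defs.mono (Q @ C # B # (Cs @ R)) - fsmult (ssign C B) (Defs.mono (Q @ B # C # (Cs @ R))) \<in> (IrrL n :: 'k fa set)"
    by (simp add: fsmult_0 Iid_IrrL)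
  show ?case using cong_trans_sm[OF c(2)[simplified] s] c(1) ssign_nz[of C B]
    by (intro exI[of _ "c * ssign C B"]) simp
qed

definition glg :: "nat \<Rightarrow> gen \<Rightarrow> bool" where
  "glg n g \<longleftrightarrow> (\<exists>i j. g = (Prop i, Prop j) \<and> 1 \<le> i \<and> i \<le> n \<and> 1 \<le> j \<and> j \<le> n)"

definition GL :: "nat \<Rightarrow> nat \<Rightarrow> 'k::comm_ring_1 fa set" where
  "GL n k = {Defs.mono w | w. (\<forall>g\<in>set w. glg n g) \<and> length w < k}"

definition Lo :: "nat \<Rightarrow> nat \<Rightarrow> 'k::comm_ring_1 fa set" where
  "Lo n k = {x. \<exists>g\<in>lspan (GL n k). x - g \<in> IrrL n}"

lemma LoI: "g \<in> lspan (GL n k) \<Longrightarrow> x - g \<in> IrrL n \<Longrightarrow> x \<in> Lo n k"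
  unfolding Lo_def by blast

lemma sub_Lo: "sub (Lo n k :: 'k::comm_ring_1 fa set)"
  unfolding sub_def
proof (intro conjI ballI allI)
  show "0 \<in> (Lo n k :: 'k fa set)" by (rule LoI[of 0]) (simp_all add: sub_0[OF sub_lspan] sub_0[OF sub_IrrL])
next
  fix x y :: "'k fa" assume "x \<in> Lo n k" "y \<in> Lo n k"
  then obtain g h where "g \<in> lspan (GL n k)" "h \<in> lspan (GL n k)" "x - g \<in> IrrL n" "y - h \<in> IrrL n"
    unfolding Lo_def by blast
  moreover have "x + y - (g + h) = (x - g) + (y - h)" by (simp add: algebra_simps)
  ultimately show "x + y \<in> Lo n k"
    by (intro LoI[of "g + h"]) (simp_all only: sub_add[OF sub_lspan] sub_add[OF sub_IrrL])
next
  fix c and x :: "'k fa" assume "x \<in> Lo n k"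
  then obtain g where "g \<in> lspan (GL n k)" "x - g \<in> IrrL n"
    unfolding Lo_def by blast
  thus "fsmult c x \<in> Lo n k"
    by (intro LoI[of "fsmult c g"]) (simp_all add: sub_sm[OF sub_lspan] sub_sm[OF sub_IrrL] flip: fsmult_diff)
qed

lemma Lo_cong: "x - y \<in> IrrL n \<Longrightarrow> y \<in> Lo n k \<Longrightarrow> x \<in> (Lo n k :: 'k::comm_ring_1 fa set)"
  unfolding Lo_def using sub_IrrL_diff by blast

lemma IrrL_Lo: "x \<in> IrrL n \<Longrightarrow> x \<in> (Lo n k :: 'k::comm_ring_1 fa set)"
  by (rule LoI[of 0]) (simp_all add: sub_0[OF sub_lspan])

definition Aw :: "(nat \<Rightarrow> sym) \<Rightarrow> nat list \<Rightarrow> gen list" where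
  "Aw al xs = map (\<lambda>r. (Prop (xs ! r), al (Suc r))) [0..<length xs]"
definition Bw :: "(nat \<Rightarrow> sym) \<Rightarrow> nat list \<Rightarrow> nat list \<Rightarrow> gen list" where
  "Bw al xs ys = map (\<lambda>r. (al (Suc r), Prop (ys ! r))) [0..<length xs]"
definition Wd :: "nat list \<Rightarrow> nat list \<Rightarrow> gen list" where
  "Wd xs ys = rev (map (\<lambda>(i, j). (Prop i, Prop j)) (zip xs ys))"

lemma cword_AB: "cword al xs ys = Aw al xs @ Bw al xs ys"
  by (simp add: cword_def Aw_def Bw_def)

lemma Aw_snoc: "Aw al (xs @ [i]) = Aw al xs @ [(Prop i, al (Suc (length xs)))]"
  by (auto simp: Aw_def nth_append intro!: map_cong)

lemma Bw_snoc: "length ys = length xs \<Longrightarrow> Bw al (xs @ [i]) (ys @ [j]) = Bw al xs ys @ [(al (Suc (length xs)), Prop j)]"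
  by (auto simp: Bw_def nth_append intro!: map_cong)

lemma Wd_snoc: "length ys = length xs \<Longrightarrow> Wd (xs @ [i]) (ys @ [j]) = (Prop i, Prop j) # Wd xs ys"
  by (simp add: Wd_def)

lemma Aw_upd: "m < length xs \<Longrightarrow> Aw al (xs[m := i]) = (Aw al xs)[m := (Prop i, al (Suc m))]"
  by (auto simp: Aw_def nth_list_update intro!: nth_equalityI)

lemma Bw_upd: "Bw al (xs[m := i]) ys = Bw al xs ys"
  by (simp add: Bw_def)

lemma Aw_nth: "m < length xs \<Longrightarrow> Aw al xs ! m = (Prop (xs ! m), al (Suc m))"
  by (simp add: Aw_def)
lemma Aw_len[simp]: "length (Aw al xs) = length xs" by (simp add: Aw_def)

lemma Aw_vw: "set xs \<subseteq> {1..n} \<Longrightarrow> \<forall>r. virtual (al r) \<Longrightarrow> vw n (Aw al xs)"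
  by (auto simp: Aw_def vw_def vgen_def vsym_virtual dest!: nth_mem)
lemma Bw_vw: "set ys \<subseteq> {1..n} \<Longrightarrow> length xs = length ys \<Longrightarrow> \<forall>r. virtual (al r) \<Longrightarrow> vw n (Bw al xs ys)"
  by (auto simp: Bw_def vw_def vgen_def vsym_virtual dest!: nth_mem)

lemma Bw_fst: "g \<in> set (Bw al xs ys) \<Longrightarrow> \<exists>r < length xs. fst g = al (Suc r) \<and> snd g = Prop (ys ! r)"
  by (auto simp: Bw_def)



lemma Wd_len: "length ys = length xs \<Longrightarrow> length (Wd xs ys) = length xs" by (simp add: Wd_def)
lemma Wd_glg: assumes "set xs \<subseteq> {1..n}" "set ys \<subseteq> {1..n}" shows "\<forall>g\<in>set (Wd xs ys). glg n g"
proof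
  fix g assume "g \<in> set (Wd xs ys)"
  then obtain a b where ab: "(a, b) \<in> set (zip xs ys)" "g = (Prop a, Prop b)" by (auto simp: Wd_def)
  from ab(1) have "a \<in> set xs" "b \<in> set ys" by (auto dest: set_zip_leftD set_zip_rightD)
  thus "glg n g" using assms ab(2) by (auto simp: glg_def)
qed

lemma GL_mono: "k \<le> k' \<Longrightarrow> lspan (GL n k) \<subseteq> (lspan (GL n k') :: 'k::comm_ring_1 fa set)"
proof
  assume kk: "k \<le> k'"
  have "GL n k \<subseteq> (GL n k' :: 'k fa set)" using kk by (auto simp: GL_def)
  hence sb: "GL n k \<subseteq> (lspan (GL n k') :: 'k fa set)" using lspan_base by blast
  fix x assume "x \<in> (lspan (GL n k) :: 'k fa set)"
  thus "x \<in> lspan (GL n k')" by (rule lspan_least[OF sub_lspan sb])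
qed

lemma GL_base: "\<forall>g\<in>set w. glg n g \<Longrightarrow> length w < k \<Longrightarrow> Defs.mono w \<in> (lspan (GL n k) :: 'k::comm_ring_1 fa set)"
  by (rule lspan_base) (auto simp: GL_def)

lemma GL_lm:
  assumes "glg n e" "g \<in> lspan (GL n k)"
  shows "fmul (Defs.mono [e]) g \<in> (lspan (GL n (Suc k)) :: 'k::comm_ring_1 fa set)"
proof (rule lspan_image[where L="fmul (Defs.mono [e])", OF _ _ _ _ _ assms(2)])
  fix s assume "s \<in> (GL n k :: 'k fa set)"
  then obtain w where "s = Defs.mono w" "\<forall>g\<in>set w. glg n g" "length w < k" by (auto simp: GL_def)
  thus "fmul (Defs.mono [e]) s \<in> lspan (GL n (Suc k))" using assms(1)
    by (simp add: mono_mult GL_base)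
qed (simp_all add: fmul_add_r fmul_sm_r fmul_zero_r sub_lspan)

lemma glg_vgen: "glg n g \<Longrightarrow> vgen n g" by (auto simp: glg_def vgen_def)

lemma main:
  fixes al :: "nat \<Rightarrow> sym"
  assumes inj: "inj al" and virt: "\<forall>r. virtual (al r)"
  shows "length xs = k \<Longrightarrow> length ys = k \<Longrightarrow> set xs \<subseteq> {1..n} \<Longrightarrow> set ys \<subseteq> {1..n} \<Longrightarrow>
    \<exists>c g. c \<noteq> 0 \<and> g \<in> lspan (GL n k) \<and>
      Defs.mono (cword al xs ys) - (fsmult c (Defs.mono (Wd xs ys)) + g) \<in> (IrrL n :: 'k::field fa set)"
proof (induction k arbitrary: xs ys)
  case 0
  hence "xs = []" "ys = []" by auto
  thus ?case
    by (intro exI[of _ "1::'k"] exI[of _ "0::'k fa"]) (simp add: cword_def Wd_def fsmult_1 sub_0[OF sub_lspan] sub_0[OF sub_IrrL])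
next
  case (Suc k)
  have IH': "Defs.mono (cword al xs ys) \<in> (Lo n (Suc k) :: 'k fa set)"
    if hh: "length xs = k" "length ys = k" "set xs \<subseteq> {1..n}" "set ys \<subseteq> {1..n}" for xs ys
  proof -
    obtain c g where cg: "g \<in> lspan (GL n k)"
      "Defs.mono (cword al xs ys) - (fsmult c (Defs.mono (Wd xs ys)) + g) \<in> (IrrL n :: 'k fa set)"
      using Suc.IH[OF hh] by blast
    show ?thesis
    proof (rule LoI[OF _ cg(2)])
      have "Defs.mono (Wd xs ys) \<in> (lspan (GL n (Suc k)) :: 'k fa set)"
        using hh by (intro GL_base) (simp_all add: Wd_glg Wd_len)
      moreover have "g \<in> lspan (GL n (Suc k))" using cg(1) GL_mono[of k "Suc k" n] by auto
      ultimately show "fsmult c (Defs.mono (Wd xs ys)) + g \<in> lspan (GL n (Suc k))"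
        by (simp add: sub_add[OF sub_lspan] sub_sm[OF sub_lspan])
    qed
  qed
  obtain xs' i where xs: "xs = xs' @ [i]" using Suc.prems(1) by (cases xs rule: rev_exhaust) auto
  obtain ys' j where ys: "ys = ys' @ [j]" using Suc.prems(2) by (cases ys rule: rev_exhaust) auto
  have lx: "length xs' = k" and ly: "length ys' = k" using Suc.prems xs ys by auto
  have sx: "set xs' \<subseteq> {1..n}" and sy: "set ys' \<subseteq> {1..n}" and ii: "i \<in> {1..n}" and jj: "j \<in> {1..n}"
    using Suc.prems xs ys by auto
  define P where "P = Aw al xs'"
  define Bs where "Bs = Bw al xs' ys'"
  define \<gamma> where "\<gamma> = al (Suc k)"
  define A where "A = (Prop i, \<gamma>)"
  define B where "B = (\<gamma>, Prop j)"
  define e where "e = (Prop i, Prop j)"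
  have vg: "virtual \<gamma>" using virt by (simp add: \<gamma>_def)
  have vP: "vw n P" unfolding P_def using sx virt by (rule Aw_vw)
  have vBs: "vw n Bs" unfolding Bs_def using sy lx ly virt by (intro Bw_vw) auto
  have vA: "vgen n A" and vB: "vgen n B" and ve: "vgen n e"
    using ii jj vg by (auto simp: A_def B_def e_def vgen_def vsym_virtual)
  have ge: "glg n e" using ii jj by (auto simp: e_def glg_def)
  have Bs_fst: "\<forall>r\<in>set Bs. fst r \<noteq> \<gamma>"
    using lx by (auto simp: Bs_def \<gamma>_def dest!: Bw_fst) (metis inj injD Suc_inject less_irrefl)
  have T: "cword al xs ys = P @ A # Bs @ [B]"
    using lx ly by (simp add: xs ys cword_AB Aw_snoc Bw_snoc P_def Bs_def A_def B_def \<gamma>_def)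
  have Tk: "cword al xs' ys' = P @ Bs" by (simp add: cword_AB P_def Bs_def)
  have Wd: "Wd xs ys = e # Wd xs' ys'" using lx ly by (simp add: xs ys Wd_snoc e_def)
  obtain c1 where c1: "c1 \<noteq> 0"
    "Defs.mono ((P @ [A]) @ Bs @ [B]) - fsmult c1 (Defs.mono ((P @ [A]) @ B # Bs @ [])) \<in> (IrrL n :: 'k fa set)"
  proof -
    have "\<forall>C\<in>set Bs. snd C \<noteq> fst B \<and> fst C \<noteq> snd B"
      using virt vg by (auto simp: Bs_def B_def dest!: Bw_fst) (metis virtual.simps(1))+
    from COMM[OF vBs vB this, of "P @ [A]" "[]"] vP vA show ?thesis using that by auto
  qed
  have b: "Defs.mono (P @ A # B # Bs) - Defs.mono (P @ e # Bs) \<in> (IrrL n :: 'k fa set)"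
  proof -
    let ?s = "ssign A B :: 'k"
    let ?t = "(if fst A = snd B then Defs.mono (P @ (fst B, snd A) # Bs) else 0) :: 'k fa"
    have sw: "Defs.mono (P @ A # B # Bs) - (fsmult ?s (Defs.mono (P @ B # A # Bs)) + Defs.mono (P @ e # Bs)
       - fsmult ?s ?t) \<in> IrrL n"
    proof -
      have sAB: "snd A = fst B" and eAB: "(fst A, snd B) = e" by (simp_all add: A_def B_def e_def)
      show ?thesis using swap_Iid[OF vP vBs vA vB] unfolding if_P[OF sAB] eAB by (rule Iid_IrrL)
    qed
    have i1: "Defs.mono (P @ B # A # Bs) \<in> (IrrL n :: 'k fa set)"
      using irr_word[OF vg _ Bs_fst, of A "P @ [B]"] vP vA vB vBs
      by (intro irr_IrrL) (auto simp: A_def)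
    have i2: "?t \<in> IrrL n"
    proof (cases "fst A = snd B")
      case True
      have "Defs.mono (P @ (\<gamma>, \<gamma>) # Bs) \<in> (IrrL n :: 'k fa set)"
        using irr_word[OF vg _ Bs_fst, of "(\<gamma>, \<gamma>)" P] vP vBs vg
        by (intro irr_IrrL) (auto simp: vgen_def vsym_virtual)
      thus ?thesis using True by (simp add: A_def B_def)
    qed (simp add: sub_0[OF sub_IrrL])
    have "Defs.mono (P @ A # B # Bs) - Defs.mono (P @ e # Bs) =
      (Defs.mono (P @ A # B # Bs) - (fsmult ?s (Defs.mono (P @ B # A # Bs)) + Defs.mono (P @ e # Bs)
       - fsmult ?s ?t)) + fsmult ?s (Defs.mono (P @ B # A # Bs)) - fsmult ?s ?t"
      by (rule ext) (simp add: fsmult_def algebra_simps)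
    also have "\<dots> \<in> IrrL n"
      by (intro sub_diff[OF sub_IrrL] sub_add[OF sub_IrrL] sub_sm[OF sub_IrrL] sw i1 i2)
    finally show ?thesis .
  qed
  have cc: "m \<le> k \<Longrightarrow> Defs.mono (take m P @ e # drop m P @ Bs) - Defs.mono (e # P @ Bs) \<in> (Lo n (Suc k) :: 'k fa set)" for m
  proof (induction m)
    case 0 show ?case by (simp add: sub_0[OF sub_Lo])
  next
    case (Suc m)
    hence mk: "m < k" and IHm: "Defs.mono (take m P @ e # drop m P @ Bs) - Defs.mono (e # P @ Bs) \<in> (Lo n (Suc k) :: 'k fa set)"
      by auto
    define z where "z = P ! m"
    define R where "R = drop (Suc m) P @ Bs"
    have z: "z = (Prop (xs' ! m), al (Suc m))" using mk lx by (simp add: z_def P_def Aw_nth)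
    have tk: "take (Suc m) P = take m P @ [z]" using mk lx by (simp add: z_def P_def take_Suc_conv_app_nth)
    have dm: "drop m P = z # drop (Suc m) P" using mk lx by (simp add: z_def P_def Cons_nth_drop_Suc)
    have vtm: "vw n (take m P)" using vP by (auto simp: vw_def dest: in_set_takeD)
    have vR: "vw n R" using vP vBs by (auto simp: vw_def R_def dest: in_set_dropD)
    have vz: "vgen n z" using vP mk lx by (auto simp: vw_def z_def P_def)
    have s1: "ssign z e = (1::'k)" by (simp add: ssign_def gpar_def e_def)
    have c1f: "snd z \<noteq> fst e" using virt by (simp add: z e_def) (metis virtual.simps(1))
    let ?tt = "(if fst z = snd e then Defs.mono (take m P @ (fst e, snd z) # R) else 0) :: 'k fa"
    have sw: "Defs.mono (take m P @ z # e # R) - (Defs.mono (take m P @ e # z # R) + 0 - ?tt) \<in> (IrrL n :: 'k fa set)"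
      using Iid_IrrL[OF swap_Iid[where 'k='k, OF vtm vR vz ve]] unfolding if_not_P[OF c1f] s1 fsmult_1 .
    have tt: "?tt \<in> Lo n (Suc k)"
    proof (cases "fst z = snd e")
      case True
      have mP: "m < length P" using mk lx by (simp add: P_def)
      have "take m P @ (fst e, snd z) # R = cword al (xs'[m := i]) ys'"
        using mP lx by (simp add: cword_AB Aw_upd Bw_upd R_def z e_def upd_conv_take_nth_drop[of m "Aw al xs'"] P_def Bs_def)
      moreover have "Defs.mono (cword al (xs'[m := i]) ys') \<in> (Lo n (Suc k) :: 'k fa set)"
        using lx ly sx sy ii by (intro IH') (auto dest: set_update_subset_insert[THEN subsetD])
      ultimately show ?thesis using True by simp
    qed (simp add: sub_0[OF sub_Lo])
    have X1: "take (Suc m) P @ e # drop (Suc m) P @ Bs = take m P @ z # e # R" by (simp add: tk R_def)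
    have X0: "take m P @ e # drop m P @ Bs = take m P @ e # z # R" by (simp add: dm R_def)
    have "Defs.mono (take (Suc m) P @ e # drop (Suc m) P @ Bs) - Defs.mono (e # P @ Bs) =
       (Defs.mono (take m P @ z # e # R) - (Defs.mono (take m P @ e # z # R) + 0 - ?tt))
       + (Defs.mono (take m P @ e # drop m P @ Bs) - Defs.mono (e # P @ Bs)) - ?tt"
      unfolding X1 X0 by (simp add: algebra_simps)
    also have "\<dots> \<in> Lo n (Suc k)"
      by (intro sub_diff[OF sub_Lo] sub_add[OF sub_Lo] IrrL_Lo sw IHm tt)
    finally show ?case .
  qed
  have c: "Defs.mono (P @ e # Bs) - Defs.mono (e # P @ Bs) \<in> (Lo n (Suc k) :: 'k fa set)"
    using cc[of k] lx by (simp add: P_def)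
  obtain c' g' where cg': "c' \<noteq> 0" "g' \<in> lspan (GL n k)"
    "Defs.mono (cword al xs' ys') - (fsmult c' (Defs.mono (Wd xs' ys')) + g') \<in> (IrrL n :: 'k fa set)"
    using Suc.IH[OF lx ly sx sy] by blast
  define g'' where "g'' = fmul (Defs.mono [e]) g'"
  have g'': "g'' \<in> lspan (GL n (Suc k))" unfolding g''_def by (rule GL_lm[OF ge cg'(2)])
  have d: "Defs.mono (e # P @ Bs) - (fsmult c' (Defs.mono (e # Wd xs' ys')) + g'') \<in> (IrrL n :: 'k fa set)"
    using lm_IrrL[of n "[e]", OF _ cg'(3)] ve
    by (simp add: fmul_diff_r fmul_add_r fmul_sm_r mono_mult Tk g''_def)
  define X where "X = (Defs.mono (cword al xs ys) :: 'k fa)"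
  define Y where "Y = (Defs.mono (P @ A # B # Bs) :: 'k fa)"
  define Z where "Z = (Defs.mono (P @ e # Bs) :: 'k fa)"
  define EE where "EE = (Defs.mono (e # P @ Bs) :: 'k fa)"
  define WW where "WW = (Defs.mono (e # Wd xs' ys') :: 'k fa)"
  have a': "X - fsmult c1 Y \<in> IrrL n" using c1(2) by (simp add: X_def Y_def T)
  have "X - fsmult (c1 * c') WW - fsmult c1 g'' =
     (X - fsmult c1 Y) + fsmult c1 (Y - Z) + fsmult c1 (Z - EE) + fsmult c1 (EE - (fsmult c' WW + g''))"
    by (rule ext) (simp add: fsmult_def algebra_simps)
  also have "\<dots> \<in> Lo n (Suc k)"
    apply (intro sub_add[OF sub_Lo] sub_sm[OF sub_Lo])
       apply (rule IrrL_Lo[OF a'])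
      apply (rule IrrL_Lo) using b apply (simp add: Y_def Z_def)
     using c apply (simp add: Z_def EE_def)
    apply (rule IrrL_Lo) using d apply (simp add: EE_def WW_def)
    done
  finally obtain h where h: "h \<in> lspan (GL n (Suc k))" "X - fsmult (c1 * c') WW - fsmult c1 g'' - h \<in> IrrL n"
    unfolding Lo_def by blast
  show ?case
  proof (intro exI conjI)
    show "c1 * c' \<noteq> 0" using c1(1) cg'(1) by simp
    show "fsmult c1 g'' + h \<in> lspan (GL n (Suc k))" using g'' h(1) by (simp add: sub_add[OF sub_lspan] sub_sm[OF sub_lspan])
    have eq: "Defs.mono (cword al xs ys) - (fsmult (c1 * c') (Defs.mono (Wd xs ys)) + (fsmult c1 g'' + h)) =
       X - fsmult (c1 * c') WW - fsmult c1 g'' - h"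
      unfolding X_def WW_def Wd by (simp add: algebra_simps)
    show "Defs.mono (cword al xs ys) - (fsmult (c1 * c') (Defs.mono (Wd xs ys)) + (fsmult c1 g'' + h)) \<in> IrrL n"
      unfolding eq by (rule h(2))
  qed
qed



fun pidx :: "sym \<Rightarrow> nat" where "pidx (Prop i) = i" | "pidx _ = 0"

lemma Wd_rev:
  "\<forall>g\<in>set w. glg n g \<Longrightarrow> Wd (rev (map (\<lambda>g. pidx (fst g)) w)) (rev (map (\<lambda>g. pidx (snd g)) w)) = w"
proof (induction w)
  case Nil thus ?case by (simp add: Wd_def)
next
  case (Cons a w)
  thus ?case by (subst rev.simps(2) list.map(2))+ (auto simp: Wd_snoc glg_def)
qed

lemma modI_mono: "X \<subseteq> Y \<Longrightarrow> modI n X \<subseteq> modI n Y" by (auto simp: modI_def)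
lemma modI_incl: "X \<subseteq> modI n (X :: 'k::comm_ring_1 fa set)"
proof
  fix x assume "x \<in> X"
  thus "x \<in> modI n X" unfolding modI_def fdiff_eq
    using sub_0[OF sub_Iid, of n] by (intro CollectI bexI[of _ x]) simp_all
qed
lemma modI_modI: "modI n (modI n X) \<subseteq> modI n (X :: 'k::comm_ring_1 fa set)"
proof
  fix x assume "x \<in> modI n (modI n X)"
  then obtain y z where "z \<in> X" "x - y \<in> Iid n" "y - z \<in> Iid n" by (auto simp: modI_def fdiff_eq)
  moreover have "x - z = (x - y) + (y - z)" by simp
  ultimately show "x \<in> modI n X" unfolding modI_def fdiff_eq
    by (metis (mono_tags, lifting) mem_Collect_eq sub_Iid sub_add)
qed

lemma Ugl_alt: "Ugl n = modI n (lspan {Defs.mono w | w. \<forall>g\<in>set w. glg n g})"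
  by (simp add: Ugl_def glg_def)

lemma GL_all: "GL n k \<subseteq> {Defs.mono w | w. \<forall>g\<in>set w. glg n g}" by (auto simp: GL_def)

lemma span_eq:
  fixes al :: "nat \<Rightarrow> sym"
  assumes inj: "inj al" and virt: "\<forall>r. virtual (al r)"
  shows "modI n (lspan (Bitab n al :: 'k::field_char_0 fa set)) = Ugl n"
proof
  have sU: "sub (Ugl n :: 'k fa set)" unfolding Ugl_def by (intro sub_modI sub_lspan)
  have "Bitab n al \<subseteq> (Ugl n :: 'k fa set)" by (auto simp: Bitab_def proj_def)
  hence "lspan (Bitab n al) \<subseteq> (Ugl n :: 'k fa set)"
  proof -
    assume BU: "Bitab n al \<subseteq> (Ugl n :: 'k fa set)"
    show ?thesis
    proof
      fix x assume "x \<in> (lspan (Bitab n al) :: 'k fa set)"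
      thus "x \<in> Ugl n" by (rule lspan_least[OF sU BU])
    qed
  qed
  hence "modI n (lspan (Bitab n al)) \<subseteq> modI n (Ugl n :: 'k fa set)" by (rule modI_mono)
  also have "\<dots> \<subseteq> Ugl n" unfolding Ugl_def by (rule modI_modI)
  finally show "modI n (lspan (Bitab n al)) \<subseteq> (Ugl n :: 'k fa set)" .
next
  define M where "M = modI n (lspan (Bitab n al :: 'k fa set))"
  have sM: "sub M" unfolding M_def by (intro sub_modI sub_lspan)
  have inM: "x \<in> Bitab n al \<Longrightarrow> x \<in> M" for x
    unfolding M_def by (rule subsetD[OF modI_incl lspan_base])
  have UL: "lspan {Defs.mono w | w. \<forall>g\<in>set w. glg n g} \<subseteq> (Ugl n :: 'k fa set)"
    unfolding Ugl_alt by (rule modI_incl)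
  have key: "\<forall>w. (\<forall>g\<in>set w. glg n g) \<longrightarrow> length w < k \<longrightarrow> Defs.mono w \<in> M" for k
  proof (induction k)
    case 0 thus ?case by simp
  next
    case (Suc k)
    show ?case
    proof (intro allI impI)
      fix w :: "gen list" assume gw: "\<forall>g\<in>set w. glg n g" and lw: "length w < Suc k"
      show "Defs.mono w \<in> M"
      proof (cases "length w < k")
        case True thus ?thesis using Suc.IH gw by blast
      next
        case False
        hence lw: "length w = k" using lw by simp
        define xs where "xs = rev (map (\<lambda>g. pidx (fst g)) w)"
        define ys where "ys = rev (map (\<lambda>g. pidx (snd g)) w)"
        have W: "Wd xs ys = w" unfolding xs_def ys_def by (rule Wd_rev[OF gw])
        have sx: "set xs \<subseteq> {1..n}" and sy: "set ys \<subseteq> {1..n}"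
          using gw by (auto simp: xs_def ys_def glg_def)
        obtain c g where cg: "c \<noteq> 0" "g \<in> lspan (GL n k)"
          "Defs.mono (cword al xs ys) - (fsmult c (Defs.mono (Wd xs ys)) + g) \<in> (IrrL n :: 'k fa set)"
          using main[OF inj virt, of xs k ys n] lw sx sy by (auto simp: xs_def ys_def)
        define u where "u = fsmult c (Defs.mono w) + g"
        have GLs: "GL n k \<subseteq> (lspan {Defs.mono w | w. \<forall>g\<in>set w. glg n g} :: 'k fa set)"
        proof
          fix s assume "s \<in> (GL n k :: 'k fa set)"
          hence "s \<in> {Defs.mono w | w. \<forall>g\<in>set w. glg n g}" using GL_all by blast
          thus "s \<in> lspan {Defs.mono w | w. \<forall>g\<in>set w. glg n g}" by (rule lspan_base)
        qed
        have gL: "g \<in> lspan {Defs.mono w | w. \<forall>g\<in>set w. glg n g}"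
          by (rule lspan_least[OF sub_lspan GLs cg(2)])
        have mw: "Defs.mono w \<in> lspan {Defs.mono w | w. \<forall>g\<in>set w. glg n g}"
          using gw by (intro lspan_base) auto
        have "u \<in> lspan {Defs.mono w | w. \<forall>g\<in>set w. glg n g}"
          unfolding u_def by (intro sub_add[OF sub_lspan] sub_sm[OF sub_lspan] mw gL)
        hence "u \<in> Ugl n" using UL by blast
        hence "u \<in> proj n (Defs.mono (cword al xs ys))"
          using cg(3) W by (simp add: proj_def fdiff_eq u_def)
        moreover have "length xs = length ys" by (simp add: xs_def ys_def)
        ultimately have "u \<in> Bitab n al" unfolding Bitab_def
          by (intro UnionI[of "proj n (Defs.mono (cword al xs ys))"]) (use sx sy in blast)+
        hence uM: "u \<in> M" by (rule inM)
        have gM: "g \<in> M"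
        proof (rule lspan_least[OF sM _ cg(2)])
          show "GL n k \<subseteq> M" using Suc.IH by (auto simp: GL_def)
        qed
        have "Defs.mono w = fsmult (1 / c) (u - g)"
          using cg(1) by (rule_tac ext) (simp add: u_def fsmult_def)
        also have "\<dots> \<in> M" by (intro sub_sm[OF sM] sub_diff[OF sM] uM gM)
        finally show ?thesis .
      qed
    qed
  qed
  have "lspan {Defs.mono w | w. \<forall>g\<in>set w. glg n g} \<subseteq> M"
  proof
    fix x assume x: "x \<in> (lspan {Defs.mono w | w. \<forall>g\<in>set w. glg n g} :: 'k fa set)"
    show "x \<in> M"
    proof (rule lspan_least[OF sM _ x])
      show "{Defs.mono w | w. \<forall>g\<in>set w. glg n g} \<subseteq> M"
      proof
        fix s assume "s \<in> ({Defs.mono w | w. \<forall>g\<in>set w. glg n g} :: 'k fa set)"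
        then obtain w where "s = Defs.mono w" "\<forall>g\<in>set w. glg n g" by blast
        thus "s \<in> M" using key[of "Suc (length w)"] by simp
      qed
    qed
  qed
  hence "Ugl n \<subseteq> modI n M" unfolding Ugl_alt by (rule modI_mono)
  also have "\<dots> \<subseteq> M" unfolding M_def by (rule modI_modI)
  finally show "Ugl n \<subseteq> modI n (lspan (Bitab n al :: 'k fa set))" unfolding M_def .
qed

theorem mainTheorem6:
  fixes n :: nat
  shows "modI n (lspan (Bitab n Pos :: 'k::field_char_0 fa set)) = (Ugl n :: 'k fa set)
       \<and> modI n (lspan (Bitab n Neg :: 'k fa set)) = Ugl n"
  by (intro conjI span_eq) (auto simp: inj_def)


end
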